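(* Let $T$ be a finite nonempty set, let $\widehat\phi\in\mathbb{R}^{T}$, $\delta>0$, and let $\gamma_{uv}\ge 0$ ($u,v\in T$) be given numbers. Define $$\mathcal{U}_{\mathrm{SB}}=\{\phi\in[0,1]^{T}:\ |\phi_v-\widehat\phi_v|\le\delta\ \ \forall v\in T,\ \ |\phi_v-\phi_u|\le\gamma_{vu}\ \ \forall u,v\in T\},$$ and assume $\mathcal{U}_{\mathrm{SB}}\neq\emptyset$. For $u\in T$ let $\underline\phi^0_u=\max\{0,\widehat\phi_u-\delta\}$, $\bar\phi^0_u=\min\{1,\widehat\phi_u+\delta\}$, $\underline\phi_u=\min_{\phi\in\mathcal{U}_{\mathrm{SB}}}\phi_u$ and $\bar\phi_u=\max_{\phi\in\mathcal{U}_{\mathrm{SB}}}\phi_u$. Then for every $v\in T$: (i) the projection $P_v(\mathcal{U}_{\mathrm{SB}})=\{\phi_v:\phi\in\mathcal{U}_{\mathrm{SB}}\}$ equals the interval $[\underline\phi_v,\bar\phi_v]$; (ii) $\underline\phi_v\ge\max_{u\in T\setminus\{v\}}\{\underline\phi_u-\gamma_{uv}\}$ and $\bar\phi_v\le\min_{u\in T\setminus\{v\}}\{\bar\phi_u+\gamma_{uv}\}$; (iii) if moreover $\gamma_{uv}=\Gamma(\mathrm{dist}(u,v))$ for all $u,v\in T$, where $\mathrm{dist}$ is a metric on $T$ and $\Gamma:\mathbb{R}\to[0,1]$ is nondecreasing, subadditive, and satisfies $\Gamma(x)=0$ iff $x=0$, then $$\underline\phi_v=\max_{u\in T}\{\underline\phi^0_u-\gamma_{uv}\}\quad\text{and}\quad\bar\phi_v=\min_{u\in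 T}\{\bar\phi^0_u+\gamma_{vu}\}.$$
   Context: $T$ models the set of tumor voxels; $\mathrm{dist}(u,v)$ is the distance (in voxels) between voxels $u$ and $v$, a metric on $T$. For $S\subseteq\mathbb{R}^{T}$ and $I\subseteq T$, $P_I(S)=\{\phi_I:\phi\in S\}$ denotes the projection onto the coordinates in $I$, with $P_v=P_{\{v\}}$. *)

theory Defs
  imports "HOL-Analysis.Analysis"
begin

text \<open>The uncertainty set U_SB, as a set of functions on T (extensional: zero outside T,
  so that it models R^T).\<close>
definition U_SB :: "'a set \<Rightarrow> ('a \<Rightarrow> real) \<Rightarrow> real \<Rightarrow> ('a \<Rightarrow> 'a \<Rightarrow> real) \<Rightarrow> ('a \<Rightarrow> real) set" where
  "U_SB T phihat \<delta> \<gamma> = {\<phi> \<in> extensional T.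
      (\<forall>v\<in>T. 0 \<le> \<phi> v \<and> \<phi> v \<le> 1)
    \<and> (\<forall>v\<in>T. \<bar>\<phi> v - phihat v\<bar> \<le> \<delta>)
    \<and> (\<forall>u\<in>T. \<forall>v\<in>T. \<bar>\<phi> v - \<phi> u\<bar> \<le> \<gamma> v u)}"

definition proj :: "'a \<Rightarrow> ('a \<Rightarrow> real) set \<Rightarrow> real set" where
  "proj v S = (\<lambda>\<phi>. \<phi> v) ` S"

definition phi_lo :: "('a \<Rightarrow> real) set \<Rightarrow> 'a \<Rightarrow> real" where
  "phi_lo S u = Inf (proj u S)"

definition phi_hi :: "('a \<Rightarrow> real) set \<Rightarrow> 'a \<Rightarrow> real" where
  "phi_hi S u = Sup (proj u S)"

definition phi0_lo :: "('a \<Rightarrow> real) \<Rightarrow> real \<Rightarrow> 'a \<Rightarrow> real" where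
  "phi0_lo phihat \<delta> u = max 0 (phihat u - \<delta>)"

definition phi0_hi :: "('a \<Rightarrow> real) \<Rightarrow> real \<Rightarrow> 'a \<Rightarrow> real" where
  "phi0_hi phihat \<delta> u = min 1 (phihat u + \<delta>)"

definition metric_on :: "'a set \<Rightarrow> ('a \<Rightarrow> 'a \<Rightarrow> real) \<Rightarrow> bool" where
  "metric_on T d \<longleftrightarrow>
     (\<forall>x\<in>T. \<forall>y\<in>T. 0 \<le> d x y \<and> d x y = d y x \<and> (d x y = 0 \<longleftrightarrow> x = y))
   \<and> (\<forall>x\<in>T. \<forall>y\<in>T. \<forall>z\<in>T. d x z \<le> d x y + d y z)"

end

theory Submission
  imports Defs
begin

lemma cc: "\<bar>x\<bar> \<le> (d::real) \<Longrightarrow> \<bar>y\<bar> \<le> d \<Longrightarrow> 0 \<le> l \<Longrightarrow> l \<le> 1 \<Longrightarrow> \<bar>(1-l)*x + l*y\<bar> \<le> d"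
proof -
  assume h: "\<bar>x\<bar> \<le> d" "\<bar>y\<bar> \<le> d" "0 \<le> l" "l \<le> 1"
  have "\<bar>(1-l)*x + l*y\<bar> \<le> \<bar>(1-l)*x\<bar> + \<bar>l*y\<bar>" by (rule abs_triangle_ineq)
  also have "\<dots> = (1-l)*\<bar>x\<bar> + l*\<bar>y\<bar>" using h by (simp add: abs_mult)
  also have "\<dots> \<le> (1-l)*d + l*d" using h by (intro add_mono mult_left_mono) auto
  finally show ?thesis by (simp add: algebra_simps)
qed
lemma a1: "\<bar>a - p\<bar> \<le> (d::real) \<Longrightarrow> \<bar>b-p\<bar> \<le> d \<Longrightarrow> 0 \<le> l \<Longrightarrow> l \<le> 1 \<Longrightarrow> \<bar>(1-l)*a + l*b - p\<bar> \<le> d"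
  using cc[of "a-p" d "b-p" l] by (simp add: algebra_simps)
lemma a2: "\<bar>a1 - a2\<bar> \<le> (g::real) \<Longrightarrow> \<bar>b1-b2\<bar> \<le> g \<Longrightarrow> 0 \<le> l \<Longrightarrow> l \<le> 1 \<Longrightarrow> \<bar>((1-l)*a1 + l*b1) - ((1-l)*a2 + l*b2)\<bar> \<le> g"
  using cc[of "a1-a2" g "b1-b2" l] by (simp add: algebra_simps)

lemma lo_lower: "\<phi> \<in> S \<Longrightarrow> \<forall>\<psi>\<in>S. 0 \<le> \<psi> x \<Longrightarrow> phi_lo S x \<le> \<phi> x"
  unfolding phi_lo_def proj_def
  by (rule cInf_lower) (auto simp: bdd_below_def)

lemma lo_greatest: "S \<noteq> {} \<Longrightarrow> \<forall>\<psi>\<in>S. b \<le> \<psi> x \<Longrightarrow> b \<le> phi_lo S x"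
  unfolding phi_lo_def proj_def
  by (rule cInf_greatest) auto

lemma hi_upper: "\<phi> \<in> S \<Longrightarrow> \<forall>\<psi>\<in>S. \<psi> x \<le> 1 \<Longrightarrow> \<phi> x \<le> phi_hi S x"
  unfolding phi_hi_def proj_def
  by (rule cSup_upper) (auto simp: bdd_above_def)

lemma hi_least: "S \<noteq> {} \<Longrightarrow> \<forall>\<psi>\<in>S. \<psi> x \<le> b \<Longrightarrow> phi_hi S x \<le> b"
  unfolding phi_hi_def proj_def
  by (rule cSup_least) auto

lemma lo_le:
  assumes "S \<noteq> {}" "\<forall>\<phi>\<in>S. \<phi> x \<le> \<phi> y + c" "\<forall>\<phi>\<in>S. 0 \<le> \<phi> x"
  shows "phi_lo S x \<le> phi_lo S y + c"
proof (rule ccontr)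
  assume "\<not> ?thesis"
  hence "Inf (proj y S) < phi_lo S x - c" by (simp add: phi_lo_def)
  moreover have "proj y S \<noteq> {}" using assms(1) by (simp add: proj_def)
  ultimately obtain a where "a \<in> proj y S" "a < phi_lo S x - c" using cInf_lessD by blast
  then obtain \<phi> where p: "\<phi> \<in> S" "\<phi> y < phi_lo S x - c" by (auto simp: proj_def)
  have "phi_lo S x \<le> \<phi> x" using lo_lower[OF p(1) assms(3)] .
  with p assms(2) show False by force
qed

lemma hi_le:
  assumes "S \<noteq> {}" "\<forall>\<phi>\<in>S. \<phi> x \<le> \<phi> y + c" "\<forall>\<phi>\<in>S. \<phi> y \<le> 1"
  shows "phi_hi S x \<le> phi_hi S y + c"
proof (rule ccontr)
  assume "\<not> ?thesis"
  hence "phi_hi S y + c < Sup (proj x S)" by (simp add: phi_hi_def)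
  moreover have "proj x S \<noteq> {}" using assms(1) by (simp add: proj_def)
  ultimately obtain a where "a \<in> proj x S" "phi_hi S y + c < a" using less_cSupD by blast
  then obtain \<phi> where p: "\<phi> \<in> S" "phi_hi S y + c < \<phi> x" by (auto simp: proj_def)
  have "\<phi> y \<le> phi_hi S y" using hi_upper[OF p(1) assms(3)] .
  with p assms(2) show False by force
qed

lemma memU: "\<phi> \<in> U_SB T phihat \<delta> \<gamma> \<longleftrightarrow> \<phi> \<in> extensional T \<and>
      (\<forall>v\<in>T. 0 \<le> \<phi> v \<and> \<phi> v \<le> 1)
    \<and> (\<forall>v\<in>T. \<bar>\<phi> v - phihat v\<bar> \<le> \<delta>)
    \<and> (\<forall>u\<in>T. \<forall>v\<in>T. \<bar>\<phi> v - \<phi> u\<bar> \<le> \<gamma> v u)"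
  by (simp add: U_SB_def)

lemma convU:
  assumes "\<phi>1 \<in> U_SB T phihat \<delta> \<gamma>" "\<phi>2 \<in> U_SB T phihat \<delta> \<gamma>" "0 \<le> l" "l \<le> 1"
  shows "restrict (\<lambda>w. (1-l)*\<phi>1 w + l*\<phi>2 w) T \<in> U_SB T phihat \<delta> \<gamma>"
proof -
  have b1: "0 \<le> (1-l)*a + l*b" if "0 \<le> a" "0 \<le> b" for a b :: real
    using that assms by simp
  have b2: "(1-l)*a + l*b \<le> 1" if "a \<le> 1" "b \<le> 1" for a b :: real
  proof -
    have "(1-l)*a + l*b \<le> (1-l)*1 + l*1" using that assms by (intro add_mono mult_left_mono) auto
    thus ?thesis by simp
  qed
  show ?thesis using assms unfolding memU
    by (auto intro!: a1 a2 b1 b2)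
qed


theorem proposition2p1:
  fixes T :: "'a set" and phihat :: "'a \<Rightarrow> real" and \<delta> :: real
    and \<gamma> :: "'a \<Rightarrow> 'a \<Rightarrow> real"
  assumes fin: "finite T" and ne: "T \<noteq> {}"
    and delta_pos: "\<delta> > 0"
    and gamma_nonneg: "\<forall>u\<in>T. \<forall>v\<in>T. \<gamma> u v \<ge> 0"
    and U_ne: "U_SB T phihat \<delta> \<gamma> \<noteq> {}"
  shows "\<forall>v\<in>T.
      proj v (U_SB T phihat \<delta> \<gamma>)
        = {phi_lo (U_SB T phihat \<delta> \<gamma>) v .. phi_hi (U_SB T phihat \<delta> \<gamma>) v}
    \<and> (\<forall>u\<in>T - {v}. phi_lo (U_SB T phihat \<delta> \<gamma>) v \<ge> phi_lo (U_SB T phihat \<delta> \<gamma>) u - \<gamma> u v)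
    \<and> (\<forall>u\<in>T - {v}. phi_hi (U_SB T phihat \<delta> \<gamma>) v \<le> phi_hi (U_SB T phihat \<delta> \<gamma>) u + \<gamma> u v)
    \<and> (\<forall>(dist :: 'a \<Rightarrow> 'a \<Rightarrow> real) (\<Gamma> :: real \<Rightarrow> real).
         metric_on T dist
       \<and> (\<forall>x\<ge>0. 0 \<le> \<Gamma> x \<and> \<Gamma> x \<le> 1)
       \<and> mono_on {0..} \<Gamma>
       \<and> (\<forall>x\<ge>0. \<forall>y\<ge>0. \<Gamma> (x + y) \<le> \<Gamma> x + \<Gamma> y)
       \<and> (\<forall>x\<ge>0. \<Gamma> x = 0 \<longleftrightarrow> x = 0)
       \<and> (\<forall>u\<in>T. \<forall>w\<in>T. \<gamma> u w = \<Gamma> (dist u w))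
       \<longrightarrow> phi_lo (U_SB T phihat \<delta> \<gamma>) v = Max ((\<lambda>u. phi0_lo phihat \<delta> u - \<gamma> u v) ` T)
         \<and> phi_hi (U_SB T phihat \<delta> \<gamma>) v = Min ((\<lambda>u. phi0_hi phihat \<delta> u + \<gamma> v u) ` T))"
proof -
  define U where "U = U_SB T phihat \<delta> \<gamma>"
  have Une: "U \<noteq> {}" using U_ne U_def by simp
  then obtain \<phi>0 where p0: "\<phi>0 \<in> U" by blast
  have box: "\<forall>\<phi>\<in>U. 0 \<le> \<phi> x" "\<forall>\<phi>\<in>U. \<phi> x \<le> 1" if "x\<in>T" for x using that by (auto simp: U_def memU)
  have dlt: "\<forall>\<phi>\<in>U. phihat x - \<delta> \<le> \<phi> x" "\<forall>\<phi>\<in>U. \<phi> x \<le> phihat x + \<delta>" if "x\<in>T" for x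
  proof -
    have "phihat x - \<delta> \<le> \<phi> x \<and> \<phi> x \<le> phihat x + \<delta>" if "\<phi> \<in> U" for \<phi>
    proof -
      have "\<bar>\<phi> x - phihat x\<bar> \<le> \<delta>" using that \<open>x \<in> T\<close> by (auto simp: U_def memU)
      thus ?thesis by (simp add: abs_le_iff)
    qed
    thus "\<forall>\<phi>\<in>U. phihat x - \<delta> \<le> \<phi> x" "\<forall>\<phi>\<in>U. \<phi> x \<le> phihat x + \<delta>" by auto
  qed
  have lip: "\<forall>\<phi>\<in>U. \<phi> x \<le> \<phi> y + \<gamma> x y" "\<forall>\<phi>\<in>U. \<phi> x \<le> \<phi> y + \<gamma> y x" if "x\<in>T" "y\<in>T" for x y
  proof -
    show "\<forall>\<phi>\<in>U. \<phi> x \<le> \<phi> y + \<gamma> x y"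
    proof
      fix \<phi> assume "\<phi> \<in> U"
      hence "\<bar>\<phi> x - \<phi> y\<bar> \<le> \<gamma> x y" using that by (auto simp: U_def memU)
      thus "\<phi> x \<le> \<phi> y + \<gamma> x y" by (simp add: abs_le_iff)
    qed
    show "\<forall>\<phi>\<in>U. \<phi> x \<le> \<phi> y + \<gamma> y x"
    proof
      fix \<phi> assume "\<phi> \<in> U"
      hence "\<bar>\<phi> y - \<phi> x\<bar> \<le> \<gamma> y x" using that by (auto simp: U_def memU)
      thus "\<phi> x \<le> \<phi> y + \<gamma> y x" by (simp add: abs_le_iff)
    qed
  qed
  have loL: "phi_lo U x \<le> phi_lo U y + \<gamma> x y" "phi_lo U x \<le> phi_lo U y + \<gamma> y x"
    if "x\<in>T" "y\<in>T" for x y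
    using lo_le[OF Une lip(1)[OF that] box(1)[OF that(1)]] lo_le[OF Une lip(2)[OF that] box(1)[OF that(1)]]
    by auto
  have hiL: "phi_hi U x \<le> phi_hi U y + \<gamma> x y" "phi_hi U x \<le> phi_hi U y + \<gamma> y x"
    if "x\<in>T" "y\<in>T" for x y
    using hi_le[OF Une lip(1)[OF that] box(2)[OF that(2)]] hi_le[OF Une lip(2)[OF that] box(2)[OF that(2)]]
    by auto
  have loB: "0 \<le> phi_lo U x" "phihat x - \<delta> \<le> phi_lo U x" "phi_lo U x \<le> 1" "phi_lo U x \<le> phihat x + \<delta>"
    if "x \<in> T" for x
  proof -
    show "0 \<le> phi_lo U x" using lo_greatest[OF Une box(1)[OF that]] .
    show "phihat x - \<delta> \<le> phi_lo U x" using lo_greatest[OF Une dlt(1)[OF that]] .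
    have "phi_lo U x \<le> \<phi>0 x" using lo_lower[OF p0 box(1)[OF that]] .
    thus "phi_lo U x \<le> 1" "phi_lo U x \<le> phihat x + \<delta>" using p0 box(2)[OF that] dlt(2)[OF that] by force+
  qed
  have hiB: "phi_hi U x \<le> 1" "phi_hi U x \<le> phihat x + \<delta>" "0 \<le> phi_hi U x" "phihat x - \<delta> \<le> phi_hi U x"
    if "x \<in> T" for x
  proof -
    show "phi_hi U x \<le> 1" using hi_least[OF Une box(2)[OF that]] .
    show "phi_hi U x \<le> phihat x + \<delta>" using hi_least[OF Une dlt(2)[OF that]] .
    have "\<phi>0 x \<le> phi_hi U x" using hi_upper[OF p0 box(2)[OF that]] .
    thus "0 \<le> phi_hi U x" "phihat x - \<delta> \<le> phi_hi U x" using p0 box(1)[OF that] dlt(1)[OF that] by force+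
  qed
  have psi0: "restrict (phi_lo U) T \<in> U_SB T phihat \<delta> \<gamma>"
    unfolding memU
  proof (intro conjI ballI)
    fix x assume xT: "x \<in> T"
    show "0 \<le> restrict (phi_lo U) T x" "restrict (phi_lo U) T x \<le> 1" using loB[OF xT] xT by auto
    show "\<bar>restrict (phi_lo U) T x - phihat x\<bar> \<le> \<delta>" using loB[OF xT] xT by (simp add: abs_le_iff)
    fix y assume yT: "y \<in> T"
    show "\<bar>restrict (phi_lo U) T y - restrict (phi_lo U) T x\<bar> \<le> \<gamma> y x"
      using loL(1)[OF yT xT] loL(2)[OF xT yT] xT yT by (simp add: abs_le_iff)
  qed simp
  have psi: "restrict (phi_lo U) T \<in> U" using psi0 unfolding U_def[symmetric] .
  have chi0: "restrict (phi_hi U) T \<in> U_SB T phihat \<delta> \<gamma>"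
    unfolding memU
  proof (intro conjI ballI)
    fix x assume xT: "x \<in> T"
    show "0 \<le> restrict (phi_hi U) T x" "restrict (phi_hi U) T x \<le> 1" using hiB[OF xT] xT by auto
    show "\<bar>restrict (phi_hi U) T x - phihat x\<bar> \<le> \<delta>" using hiB[OF xT] xT by (simp add: abs_le_iff)
    fix y assume yT: "y \<in> T"
    show "\<bar>restrict (phi_hi U) T y - restrict (phi_hi U) T x\<bar> \<le> \<gamma> y x"
      using hiL(1)[OF yT xT] hiL(2)[OF xT yT] xT yT by (simp add: abs_le_iff)
  qed simp
  have chi: "restrict (phi_hi U) T \<in> U" using chi0 unfolding U_def[symmetric] .
  have main: "\<forall>v\<in>T.
      proj v U = {phi_lo U v .. phi_hi U v}
    \<and> (\<forall>u\<in>T - {v}. phi_lo U v \<ge> phi_lo U u - \<gamma> u v)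
    \<and> (\<forall>u\<in>T - {v}. phi_hi U v \<le> phi_hi U u + \<gamma> u v)
    \<and> (\<forall>(dist :: 'a \<Rightarrow> 'a \<Rightarrow> real) (\<Gamma> :: real \<Rightarrow> real).
         metric_on T dist
       \<and> (\<forall>x\<ge>0. 0 \<le> \<Gamma> x \<and> \<Gamma> x \<le> 1)
       \<and> mono_on {0..} \<Gamma>
       \<and> (\<forall>x\<ge>0. \<forall>y\<ge>0. \<Gamma> (x + y) \<le> \<Gamma> x + \<Gamma> y)
       \<and> (\<forall>x\<ge>0. \<Gamma> x = 0 \<longleftrightarrow> x = 0)
       \<and> (\<forall>u\<in>T. \<forall>w\<in>T. \<gamma> u w = \<Gamma> (dist u w))
       \<longrightarrow> phi_lo U v = Max ((\<lambda>u. phi0_lo phihat \<delta> u - \<gamma> u v) ` T)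
         \<and> phi_hi U v = Min ((\<lambda>u. phi0_hi phihat \<delta> u + \<gamma> v u) ` T))"
  proof
    fix v assume vT: "v \<in> T"
    have i: "proj v U = {phi_lo U v .. phi_hi U v}"
    proof
      show "proj v U \<subseteq> {phi_lo U v .. phi_hi U v}"
        using lo_lower[OF _ box(1)[OF vT]] hi_upper[OF _ box(2)[OF vT]] by (auto simp: proj_def)
    next
      show "{phi_lo U v .. phi_hi U v} \<subseteq> proj v U"
      proof
        fix t assume t: "t \<in> {phi_lo U v .. phi_hi U v}"
        show "t \<in> proj v U"
        proof (cases "phi_lo U v = phi_hi U v")
          case True
          hence "t = restrict (phi_lo U) T v" using t vT by simp
          thus ?thesis using psi unfolding proj_def by (metis (no_types, lifting) image_eqI)
        next
          case False
          hence lt: "phi_lo U v < phi_hi U v" using t by simp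
          define l where "l = (t - phi_lo U v) / (phi_hi U v - phi_lo U v)"
          have l01: "0 \<le> l" "l \<le> 1" using t lt by (auto simp: l_def field_simps)
          have m: "restrict (\<lambda>w. (1-l)*restrict (phi_lo U) T w + l*restrict (phi_hi U) T w) T \<in> U"
            using convU[OF psi[unfolded U_def] chi[unfolded U_def] l01] by (simp add: U_def)
          have "restrict (\<lambda>w. (1-l)*restrict (phi_lo U) T w + l*restrict (phi_hi U) T w) T v = t"
          proof -
            have e: "l*(phi_hi U v - phi_lo U v) = t - phi_lo U v" using lt by (simp add: l_def)
            have "(1-l)*phi_lo U v + l*phi_hi U v = phi_lo U v + l*(phi_hi U v - phi_lo U v)"
              by (simp add: algebra_simps)
            thus ?thesis using vT e by simp
          qed
          thus ?thesis using m unfolding proj_def by (metis (no_types, lifting) image_eqI)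
        qed
      qed
    qed
    have ii: "\<forall>u\<in>T - {v}. phi_lo U v \<ge> phi_lo U u - \<gamma> u v"
      using loL(1)[OF _ vT] by force
    have iii: "\<forall>u\<in>T - {v}. phi_hi U v \<le> phi_hi U u + \<gamma> u v"
      using hiL(2)[OF vT] by force
    have iv: "phi_lo U v = Max ((\<lambda>u. phi0_lo phihat \<delta> u - \<gamma> u v) ` T)
         \<and> phi_hi U v = Min ((\<lambda>u. phi0_hi phihat \<delta> u + \<gamma> v u) ` T)"
      if H: "metric_on T dist
       \<and> (\<forall>x\<ge>0. 0 \<le> \<Gamma> x \<and> \<Gamma> x \<le> 1)
       \<and> mono_on {0..} \<Gamma>
       \<and> (\<forall>x\<ge>0. \<forall>y\<ge>0. \<Gamma> (x + y) \<le> \<Gamma> x + \<Gamma> y)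
       \<and> (\<forall>x\<ge>0. \<Gamma> x = 0 \<longleftrightarrow> x = 0)
       \<and> (\<forall>u\<in>T. \<forall>w\<in>T. \<gamma> u w = \<Gamma> (dist u w))" for dist \<Gamma>
    proof -
      have met: "metric_on T dist" and mon: "mono_on {0..} \<Gamma>"
        and sub: "\<forall>x\<ge>0. \<forall>y\<ge>0. \<Gamma> (x + y) \<le> \<Gamma> x + \<Gamma> y"
        and z: "\<forall>x\<ge>0. \<Gamma> x = 0 \<longleftrightarrow> x = 0" and g: "\<forall>u\<in>T. \<forall>w\<in>T. \<gamma> u w = \<Gamma> (dist u w)"
        using H by auto
      have gsym: "\<gamma> a b = \<gamma> b a" if "a\<in>T" "b\<in>T" for a b
        using met g that unfolding metric_on_def by metis
      have g0: "\<gamma> a a = 0" if "a \<in> T" for a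
        using met g z that unfolding metric_on_def by auto
      have tri: "\<gamma> a c \<le> \<gamma> a b + \<gamma> b c" if "a\<in>T" "b\<in>T" "c\<in>T" for a b c
      proof -
        have d: "0 \<le> dist a b" "0 \<le> dist b c" "dist a c \<le> dist a b + dist b c" "0 \<le> dist a c"
          using met that unfolding metric_on_def by auto
        have "\<Gamma> (dist a c) \<le> \<Gamma> (dist a b + dist b c)"
          using mon d unfolding mono_on_def by auto
        also have "\<dots> \<le> \<Gamma> (dist a b) + \<Gamma> (dist b c)" using sub d by auto
        finally show ?thesis using g that by simp
      qed
      define m where "m w = Max ((\<lambda>u. phi0_lo phihat \<delta> u - \<gamma> u w) ` T)" for w
      define M where "M w = Min ((\<lambda>u. phi0_hi phihat \<delta> u + \<gamma> w u) ` T)" for w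
      have mle: "m w \<le> phi_lo U w" if "w \<in> T" for w
      proof -
        have "\<forall>u\<in>T. phi0_lo phihat \<delta> u - \<gamma> u w \<le> phi_lo U w"
        proof
          fix u assume uT: "u \<in> T"
          have "phi0_lo phihat \<delta> u \<le> phi_lo U u" using loB(1,2)[OF uT] by (simp add: phi0_lo_def)
          thus "phi0_lo phihat \<delta> u - \<gamma> u w \<le> phi_lo U w" using loL(1)[OF uT that] by simp
        qed
        thus ?thesis unfolding m_def using fin ne by (simp add: Max_le_iff)
      qed
      have mge: "phi0_lo phihat \<delta> w \<le> m w" if "w \<in> T" for w
      proof -
        have "phi0_lo phihat \<delta> w - \<gamma> w w \<le> m w" unfolding m_def using fin that by (intro Max_ge) auto
        thus ?thesis using g0[OF that] by simp
      qed
      have mLp: "m a \<le> m b + \<gamma> b a" if "a \<in> T" "b \<in> T" for a b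
      proof -
        have "\<forall>u\<in>T. phi0_lo phihat \<delta> u - \<gamma> u a \<le> m b + \<gamma> b a"
        proof
          fix u assume uT: "u \<in> T"
          have "phi0_lo phihat \<delta> u - \<gamma> u b \<le> m b"
            unfolding m_def using fin uT by (intro Max_ge) auto
          moreover have "\<gamma> u b \<le> \<gamma> u a + \<gamma> a b" using tri uT that by blast
          ultimately show "phi0_lo phihat \<delta> u - \<gamma> u a \<le> m b + \<gamma> b a"
            using gsym[OF that] by simp
        qed
        thus ?thesis unfolding m_def[of a] using fin ne by (simp add: Max_le_iff)
      qed
      have mU0: "restrict m T \<in> U_SB T phihat \<delta> \<gamma>"
        unfolding memU
      proof (intro conjI ballI)
        fix x assume xT: "x \<in> T"
        show "0 \<le> restrict m T x" using mge[OF xT] xT by (simp add: phi0_lo_def)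
        show "restrict m T x \<le> 1" using mle[OF xT] loB(3)[OF xT] xT by simp
        show "\<bar>restrict m T x - phihat x\<bar> \<le> \<delta>" using mle[OF xT] loB(4)[OF xT] mge[OF xT] xT
          by (simp add: phi0_lo_def abs_le_iff)
        fix y assume yT: "y \<in> T"
        show "\<bar>restrict m T y - restrict m T x\<bar> \<le> \<gamma> y x"
          using mLp[OF xT yT] mLp[OF yT xT] xT yT gsym[OF xT yT] by (simp add: abs_le_iff)
      qed simp
      have mU: "restrict m T \<in> U" using mU0 unfolding U_def[symmetric] .
      have lo_eq: "phi_lo U v = m v"
        using lo_lower[OF mU box(1)[OF vT]] mle[OF vT] vT by simp
      have Mge: "phi_hi U w \<le> M w" if "w \<in> T" for w
      proof -
        have "\<forall>u\<in>T. phi_hi U w \<le> phi0_hi phihat \<delta> u + \<gamma> w u"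
        proof
          fix u assume uT: "u \<in> T"
          have "phi_hi U u \<le> phi0_hi phihat \<delta> u" using hiB(1,2)[OF uT] by (simp add: phi0_hi_def)
          thus "phi_hi U w \<le> phi0_hi phihat \<delta> u + \<gamma> w u" using hiL(1)[OF that uT] by simp
        qed
        thus ?thesis unfolding M_def using fin ne by (simp add: Min_ge_iff)
      qed
      have Mle: "M w \<le> phi0_hi phihat \<delta> w" if "w \<in> T" for w
      proof -
        have "M w \<le> phi0_hi phihat \<delta> w + \<gamma> w w" unfolding M_def using fin that by (intro Min_le) auto
        thus ?thesis using g0[OF that] by simp
      qed
      have MLp: "M a \<le> M b + \<gamma> a b" if "a \<in> T" "b \<in> T" for a b
      proof -
        have "\<forall>u\<in>T. M a - \<gamma> a b \<le> phi0_hi phihat \<delta> u + \<gamma> b u"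
        proof
          fix u assume uT: "u \<in> T"
          have "M a \<le> phi0_hi phihat \<delta> u + \<gamma> a u"
            unfolding M_def using fin uT by (intro Min_le) auto
          moreover have "\<gamma> a u \<le> \<gamma> a b + \<gamma> b u" using tri uT that by blast
          ultimately show "M a - \<gamma> a b \<le> phi0_hi phihat \<delta> u + \<gamma> b u" by simp
        qed
        hence "M a - \<gamma> a b \<le> M b" unfolding M_def[of b] using fin ne by (simp add: Min_ge_iff)
        thus ?thesis by simp
      qed
      have MU0: "restrict M T \<in> U_SB T phihat \<delta> \<gamma>"
        unfolding memU
      proof (intro conjI ballI)
        fix x assume xT: "x \<in> T"
        show "restrict M T x \<le> 1" using Mle[OF xT] xT by (simp add: phi0_hi_def)
        show "0 \<le> restrict M T x" using Mge[OF xT] hiB(3)[OF xT] xT by simp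
        show "\<bar>restrict M T x - phihat x\<bar> \<le> \<delta>" using Mge[OF xT] hiB(4)[OF xT] Mle[OF xT] xT
          by (simp add: phi0_hi_def abs_le_iff)
        fix y assume yT: "y \<in> T"
        show "\<bar>restrict M T y - restrict M T x\<bar> \<le> \<gamma> y x"
          using MLp[OF xT yT] MLp[OF yT xT] xT yT gsym[OF xT yT] by (simp add: abs_le_iff)
      qed simp
      have MU: "restrict M T \<in> U" using MU0 unfolding U_def[symmetric] .
      have hi_eq: "phi_hi U v = M v"
        using hi_upper[OF MU box(2)[OF vT]] Mge[OF vT] vT by simp
      show ?thesis using lo_eq hi_eq by (simp add: m_def M_def)
    qed
    show "proj v U = {phi_lo U v .. phi_hi U v}
    \<and> (\<forall>u\<in>T - {v}. phi_lo U v \<ge> phi_lo U u - \<gamma> u v)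
    \<and> (\<forall>u\<in>T - {v}. phi_hi U v \<le> phi_hi U u + \<gamma> u v)
    \<and> (\<forall>(dist :: 'a \<Rightarrow> 'a \<Rightarrow> real) (\<Gamma> :: real \<Rightarrow> real).
         metric_on T dist
       \<and> (\<forall>x\<ge>0. 0 \<le> \<Gamma> x \<and> \<Gamma> x \<le> 1)
       \<and> mono_on {0..} \<Gamma>
       \<and> (\<forall>x\<ge>0. \<forall>y\<ge>0. \<Gamma> (x + y) \<le> \<Gamma> x + \<Gamma> y)
       \<and> (\<forall>x\<ge>0. \<Gamma> x = 0 \<longleftrightarrow> x = 0)
       \<and> (\<forall>u\<in>T. \<forall>w\<in>T. \<gamma> u w = \<Gamma> (dist u w))
       \<longrightarrow> phi_lo U v = Max ((\<lambda>u. phi0_lo phihat \<delta> u - \<gamma> u v) ` T)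
         \<and> phi_hi U v = Min ((\<lambda>u. phi0_hi phihat \<delta> u + \<gamma> v u) ` T))"
      using i ii iii iv by blast
  qed
  thus ?thesis unfolding U_def .
qed

end
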